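(* Let $\varepsilon>0$, and let $\gamma\in C([0,1])\cap C^1((0,1))$ satisfy $\gamma(0)=\gamma(1)=0$ and $\gamma(t)>0$ for $t\in(0,1)$. Let $c(t):=\dot\gamma(t)-\varepsilon/\gamma(t)$ for $t\in(0,1)$. Suppose: - the improper integral $\int_0^1 \frac{1}{\gamma(t)}\,\mathrm dt$ is finite, and - the product $\dot\gamma(t)\gamma(t)$ has a (unique) continuous extension to $[0,1]$. Then there exists a strictly increasing, bijective, continuously differentiable time change $\theta:[0,1]\to[0,1]$ such that the function $$\hat c(t):=c(\theta(t))\dot\theta(t)=\Big(\dot\gamma(\theta(t))-\frac{\varepsilon}{\gamma(\theta(t))}\Big)\dot\theta(t),$$ defined for $t\in(0,1)$, has a continuous extension to $[0,1]$. *)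

theory Defs
  imports "HOL-Analysis.Analysis"
begin

definition improper_integral_converges :: "(real \<Rightarrow> real) \<Rightarrow> real \<Rightarrow> real \<Rightarrow> bool" where
  "improper_integral_converges f a b \<longleftrightarrow>
     (\<exists>I. ((\<lambda>(x, y). integral {x..y} f) \<longlongrightarrow> I) (at_right a \<times>\<^sub>F at_left b))"

end

theory Submission imports Defs "HOL-Real_Asymp.Real_Asymp" begin

lemma deriv_closed:
  fixes \<phi> \<psi> :: "real \<Rightarrow> real"
  assumes phic: "continuous_on {a..b} \<phi>"
    and der: "\<And>x. x \<in> {a<..<b} \<Longrightarrow> (\<phi> has_real_derivative \<psi> x) (at x)"
    and psic: "continuous_on {a..b} \<psi>" and x: "x \<in> {a..b}"
  shows "(\<phi> has_real_derivative \<psi> x) (at x within {a..b})"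
proof -
  have key: "\<exists>z. dist z x < dist y x \<and> z \<in> {a..b} \<and> (\<phi> y - \<phi> x) / (y - x) = \<psi> z"
    if y: "y \<in> {a..b}" "y \<noteq> x" for y
  proof -
    define l where "l = min x y"
    define u where "u = max x y"
    have lu: "l < u" "a \<le> l" "u \<le> b" using x y by (auto simp: l_def u_def)
    have "continuous_on {l..u} \<phi>" using lu by (intro continuous_on_subset[OF phic]) auto
    moreover have "\<phi> differentiable (at z)" if "l < z" "z < u" for z
      using der[of z] lu that real_differentiable_def by force
    ultimately obtain m z where z: "l < z" "z < u" "DERIV \<phi> z :> m" "\<phi> u - \<phi> l = (u - l) * m"
      using MVT[OF lu(1)] by blast
    have "m = \<psi> z" using der[of z] z lu DERIV_unique by force
    moreover have "(\<phi> y - \<phi> x) / (y - x) = m"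
      using z(4) lu(1) y(2) by (cases "x < y") (auto simp: l_def u_def field_simps)
    moreover have "dist z x < dist y x" using z y(2) by (cases "x < y") (auto simp: l_def u_def dist_real_def)
    ultimately show ?thesis using z lu by auto
  qed
  have "((\<lambda>y. (\<phi> y - \<phi> x) / (y - x)) \<longlongrightarrow> \<psi> x) (at x within {a..b})"
    unfolding Lim_within
  proof (intro allI impI)
    fix e :: real assume e: "e > 0"
    obtain d where d: "d > 0" "\<forall>z\<in>{a..b}. dist z x < d \<longrightarrow> dist (\<psi> z) (\<psi> x) < e"
      using psic x e unfolding continuous_on_iff by blast
    show "\<exists>d>0. \<forall>y\<in>{a..b}. 0 < dist y x \<and> dist y x < d \<longrightarrow> dist ((\<phi> y - \<phi> x) / (y - x)) (\<psi> x) < e"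
    proof (intro exI[of _ d] conjI ballI impI)
      fix y assume y: "y \<in> {a..b}" "0 < dist y x \<and> dist y x < d"
      then obtain z where "dist z x < dist y x" "z \<in> {a..b}" "(\<phi> y - \<phi> x) / (y - x) = \<psi> z"
        using key[of y] by auto
      then show "dist ((\<phi> y - \<phi> x) / (y - x)) (\<psi> x) < e" using d y by auto
    qed (use d in auto)
  qed
  then show ?thesis by (simp add: has_field_derivative_iff)
qed

lemma integrable_improper:
  fixes f :: "real \<Rightarrow> real"
  assumes int: "\<And>x y. 0 < x \<Longrightarrow> y < 1 \<Longrightarrow> f integrable_on {x..y}"
    and conv: "((\<lambda>(x, y). integral {x..y} f) \<longlongrightarrow> I) (at_right 0 \<times>\<^sub>F at_left 1)"
    and f01: "f 0 = 0" "f 1 = 0"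
    and nn: "\<And>t. t \<in> {0<..<1} \<Longrightarrow> f t \<ge> 0"
  shows "f integrable_on {0..1}"
proof -
  define a :: "nat \<Rightarrow> real" where "a k = 1 / (real k + 2)" for k
  define b :: "nat \<Rightarrow> real" where "b k = 1 - 1 / (real k + 2)" for k
  define g where "g k t = (if t \<in> {a k..b k} then f t else 0)" for k t
  have a_pos: "0 < a k" for k by (simp add: a_def)
  have b_lt: "b k < 1" for k by (simp add: b_def)
  have ab01: "{a k..b k} \<inter> {0..1} = {a k..b k}" for k
    using a_pos b_lt by (auto simp: a_def b_def)
  have gint: "g k integrable_on {0..1}" for k
    unfolding g_def integrable_restrict_Int ab01 using int a_pos b_lt by blast
  have gintegral: "integral {0..1} (g k) = integral {a k..b k} f" for k
    unfolding g_def integral_restrict_Int ab01 ..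
  have amono: "a (Suc k) \<le> a k" for k by (simp add: a_def frac_le)
  have bmono: "b k \<le> b (Suc k)" for k by (simp add: b_def frac_le)
  have gmono: "g k t \<le> g (Suc k) t" if "t \<in> {0..1}" for k t
  proof -
    have "t \<in> {a k..b k} \<Longrightarrow> t \<in> {a (Suc k)..b (Suc k)}" using amono[of k] bmono[of k] by auto
    moreover have "t \<in> {a (Suc k)..b (Suc k)} \<Longrightarrow> f t \<ge> 0"
      using nn[of t] a_pos[of "Suc k"] b_lt[of "Suc k"] by auto
    ultimately show ?thesis by (auto simp: g_def)
  qed
  have a0: "a \<longlonglongrightarrow> 0"
    unfolding a_def by real_asymp
  have b1: "b \<longlonglongrightarrow> 1"
    unfolding b_def by real_asymp
  have glim: "(\<lambda>k. g k t) \<longlonglongrightarrow> f t" if "t \<in> {0..1}" for t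
  proof (cases "t \<in> {0<..<1}")
    case True
    have "eventually (\<lambda>k. a k < t) sequentially"
      using order_tendstoD(2)[OF a0, of t] True by auto
    moreover have "eventually (\<lambda>k. t < b k) sequentially"
      using order_tendstoD(1)[OF b1, of t] True by auto
    ultimately have "eventually (\<lambda>k. g k t = f t) sequentially"
      by eventually_elim (auto simp: g_def)
    then show ?thesis by (rule tendsto_eventually)
  next
    case False
    then have "t = 0 \<or> t = 1" using that by auto
    then have "g k t = 0" "f t = 0" for k using f01 a_pos[of k] b_lt[of k] by (auto simp: g_def)
    then show ?thesis by simp
  qed
  have "filterlim a (at_right 0) sequentially"
    using a0 a_pos by (intro tendsto_imp_filterlim_at_right) auto
  moreover have "filterlim b (at_left 1) sequentially"
    using b1 b_lt by (intro tendsto_imp_filterlim_at_left) auto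
  ultimately have "filterlim (\<lambda>k. (a k, b k)) (at_right 0 \<times>\<^sub>F at_left 1) sequentially"
    by (rule filterlim_Pair)
  from filterlim_compose[OF conv this]
  have "(\<lambda>k. integral {a k..b k} f) \<longlonglongrightarrow> I"
    by simp
  then have "bounded (range (\<lambda>k. integral {0..1} (g k)))"
    unfolding gintegral by (rule convergent_imp_bounded)
  then show ?thesis
    using monotone_convergence_increasing[of g "{0..1}" f] gint gmono glim by blast
qed

theorem lemma4p1:
  fixes \<epsilon> :: real and \<gamma> \<gamma>' :: "real \<Rightarrow> real"
  assumes eps: "\<epsilon> > 0"
    and cont: "continuous_on {0..1} \<gamma>"
    and deriv: "\<And>t. t \<in> {0<..<1} \<Longrightarrow> (\<gamma> has_real_derivative \<gamma>' t) (at t)"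
    and deriv_cont: "continuous_on {0<..<1} \<gamma>'"
    and ends: "\<gamma> 0 = 0" "\<gamma> 1 = 0"
    and pos: "\<And>t. t \<in> {0<..<1} \<Longrightarrow> \<gamma> t > 0"
    and integ: "improper_integral_converges (\<lambda>t. 1 / \<gamma> t) 0 1"
    and ext: "\<exists>g. continuous_on {0..1} g \<and> (\<forall>t\<in>{0<..<1}. g t = \<gamma>' t * \<gamma> t)"
  shows "\<exists>\<theta> \<theta>'. strict_mono_on {0..1} \<theta> \<and> bij_betw \<theta> {0..1} {0..1}
          \<and> (\<forall>t\<in>{0..1}. (\<theta> has_real_derivative \<theta>' t) (at t within {0..1}))
          \<and> continuous_on {0..1} \<theta>'
          \<and> (\<exists>h. continuous_on {0..1} h \<and>
               (\<forall>t\<in>{0<..<1}. h t = (\<gamma>' (\<theta> t) - \<epsilon> / \<gamma> (\<theta> t)) * \<theta>' t))"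
proof -
  define f where "f t = 1 / \<gamma> t" for t
  obtain g where g: "continuous_on {0..1} g" "\<And>t. t\<in>{0<..<1} \<Longrightarrow> g t = \<gamma>' t * \<gamma> t"
    using ext by blast
  obtain I where I: "((\<lambda>(x, y). integral {x..y} f) \<longlongrightarrow> I) (at_right 0 \<times>\<^sub>F at_left 1)"
    using integ unfolding improper_integral_converges_def f_def by blast
  have fcont: "continuous_on {0<..<1} f"
    unfolding f_def using pos
    by (intro continuous_intros continuous_on_subset[OF cont]) force+
  have fint: "f integrable_on {0..1}"
  proof (rule integrable_improper[OF _ I])
    fix x y :: real assume xy: "0 < x" "y < 1"
    show "f integrable_on {x..y}"
    proof (cases "x \<le> y")
      case True
      have "continuous_on {x..y} f" using xy by (intro continuous_on_subset[OF fcont]) auto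
      then show ?thesis by (rule integrable_continuous_interval)
    qed (simp add: integrable_on_empty)
  qed (use ends pos in \<open>auto simp: f_def less_imp_le\<close>)
  define F where "F x = integral {0..x} f" for x
  have Fcont: "continuous_on {0..1} F"
    unfolding F_def by (rule indefinite_integral_continuous_1[OF fint])
  have Fder: "(F has_real_derivative f x) (at x)" if x: "x \<in> {0<..<1}" for x
  proof -
    have "isCont f x" using fcont x by (simp add: continuous_on_eq_continuous_at)
    then have "continuous (at x within {0..1} - {}) f" by (simp add: continuous_at_imp_continuous_at_within)
    from integral_has_vector_derivative_continuous_at[OF fint _ _ this]
    have "(F has_vector_derivative f x) (at x within {0..1})" using x by (simp add: F_def[abs_def])
    then show ?thesis using x by (simp add: at_within_Icc_at has_real_derivative_iff_has_vector_derivative)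
  qed
  have fpos: "f x > 0" if "x \<in> {0<..<1}" for x using pos[OF that] by (simp add: f_def)
  have Fmono: "F x < F y" if "0 \<le> x" "x < y" "y \<le> 1" for x y
  proof (rule DERIV_pos_imp_increasing_open[OF that(2)])
    show "continuous_on {x..y} F" using that by (intro continuous_on_subset[OF Fcont]) auto
    fix z assume "x < z" "z < y"
    then have "z \<in> {0<..<1}" using that by auto
    then show "\<exists>d. DERIV F z :> d \<and> d > 0" using Fder[of z] fpos[of z] by blast
  qed
  define L where "L = F 1"
  have F0: "F 0 = 0" by (simp add: F_def)
  have Lpos: "L > 0" using Fmono[of 0 1] F0 by (simp add: L_def)
  define s where "s x = F x / L" for x
  have s01: "s 0 = 0" "s 1 = 1" using F0 Lpos by (auto simp: s_def L_def)
  have smono: "s x < s y" if "0 \<le> x" "x < y" "y \<le> 1" for x y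
    using Fmono[OF that] Lpos by (simp add: s_def divide_strict_right_mono)
  have scont: "continuous_on {0..1} s"
    unfolding s_def using Lpos by (intro continuous_intros Fcont) auto
  have sder: "(s has_real_derivative f x / L) (at x)" if "x \<in> {0<..<1}" for x
    unfolding s_def[abs_def] by (rule DERIV_cdivide[OF Fder[OF that]])
  have sinj: "inj_on s {0..1}"
    by (rule strict_mono_on_imp_inj_on) (auto simp: strict_mono_on_def intro: smono)
  have sle: "s x \<in> {0..1}" if "x \<in> {0..1}" for x
  proof -
    have "s 0 \<le> s x" using that smono[of 0 x] by (cases "x = 0") auto
    moreover have "s x \<le> s 1" using that smono[of x 1] by (cases "x = 1") auto
    ultimately show ?thesis using s01 by auto
  qed
  have simg: "s ` {0..1} = {0..1}"
  proof
    show "s ` {0..1} \<subseteq> {0..1}" using sle by auto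
    show "{0..1} \<subseteq> s ` {0..1}"
    proof
      fix y :: real assume "y \<in> {0..1}"
      then obtain x where "0 \<le> x" "x \<le> 1" "s x = y" using IVT'[of s 0 y 1] s01 scont by auto
      then show "y \<in> s ` {0..1}" by auto
    qed
  qed
  have sbij: "bij_betw s {0..1} {0..1}" using sinj simg by (simp add: bij_betw_def)
  define \<theta> where "\<theta> = the_inv_into {0..1} s"
  have thbij: "bij_betw \<theta> {0..1} {0..1}" unfolding \<theta>_def by (rule bij_betw_the_inv_into[OF sbij])
  have th_s: "\<theta> (s x) = x" if "x \<in> {0..1}" for x
    unfolding \<theta>_def using the_inv_into_f_f[OF sinj that] .
  have s_th: "s (\<theta> t) = t" if "t \<in> {0..1}" for t
    unfolding \<theta>_def using f_the_inv_into_f[OF sinj] that simg by auto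
  have th01: "\<theta> t \<in> {0..1}" if "t \<in> {0..1}" for t
    using thbij that by (auto simp: bij_betw_def)
  have th0: "\<theta> 0 = 0" and th1: "\<theta> 1 = 1" using th_s[of 0] th_s[of 1] s01 by auto
  have thmono: "strict_mono_on {0..1} \<theta>"
    unfolding strict_mono_on_def
  proof (intro allI impI, elim conjE)
    fix t u :: real assume tu: "t \<in> {0..1}" "u \<in> {0..1}" "t < u"
    show "\<theta> t < \<theta> u"
    proof (rule ccontr)
      assume "\<not> \<theta> t < \<theta> u"
      then have "\<theta> u \<le> \<theta> t" by simp
      then have "s (\<theta> u) \<le> s (\<theta> t)" using smono[of "\<theta> u" "\<theta> t"] th01 tu
        by (cases "\<theta> u = \<theta> t") auto
      then show False using s_th tu by auto
    qed
  qed
  have thcont: "continuous_on {0..1} \<theta>"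
    using continuous_on_inv[OF scont compact_Icc] th_s simg by auto
  have thopen: "\<theta> t \<in> {0<..<1}" if "t \<in> {0<..<1}" for t
  proof -
    have "\<theta> 0 < \<theta> t" "\<theta> t < \<theta> 1" using thmono that unfolding strict_mono_on_def by auto
    then show ?thesis using th0 th1 by auto
  qed
  define \<theta>' where "\<theta>' t = L * \<gamma> (\<theta> t)" for t
  have th'cont: "continuous_on {0..1} \<theta>'"
    unfolding \<theta>'_def
    by (intro continuous_intros continuous_on_compose2[OF cont thcont]) (use th01 in auto)
  have thder_open: "(\<theta> has_real_derivative \<theta>' t) (at t)" if t: "t \<in> {0<..<1}" for t
  proof -
    have "DERIV s (\<theta> t) :> f (\<theta> t) / L" using sder thopen t by blast
    moreover have "f (\<theta> t) / L \<noteq> 0" using fpos[OF thopen[OF t]] Lpos by simp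
    moreover have "isCont \<theta> t"
      using continuous_on_interior[OF thcont] t by simp
    ultimately have "DERIV \<theta> t :> inverse (f (\<theta> t) / L)"
      using t s_th by (intro DERIV_inverse_function[where a=0 and b=1]) auto
    moreover have "inverse (f (\<theta> t) / L) = \<theta>' t" by (simp add: f_def \<theta>'_def)
    ultimately show ?thesis by simp
  qed
  have thder: "\<forall>t\<in>{0..1}. (\<theta> has_real_derivative \<theta>' t) (at t within {0..1})"
    using deriv_closed[OF thcont thder_open th'cont] by blast
  define h where "h t = L * (g (\<theta> t) - \<epsilon>)" for t
  have hcont: "continuous_on {0..1} h"
    unfolding h_def
    by (intro continuous_intros continuous_on_compose2[OF g(1) thcont]) (use th01 in auto)
  have heq: "h t = (\<gamma>' (\<theta> t) - \<epsilon> / \<gamma> (\<theta> t)) * \<theta>' t" if t: "t \<in> {0<..<1}" for t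
  proof -
    have "\<gamma> (\<theta> t) > 0" using pos thopen t by blast
    then show ?thesis using g(2)[OF thopen[OF t]] by (simp add: h_def \<theta>'_def field_simps)
  qed
  show ?thesis
    apply (rule exI[of _ \<theta>], rule exI[of _ \<theta>'])
    apply (intro conjI thmono thbij thder th'cont)
    apply (rule exI[of _ h])
    using hcont heq by blast
qed

end
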